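(* Let \[U_1:=\left\{(a,b)\in\bigl([0,1/2)\times[1/2,1)\bigr)\cup\bigl([1/2,1)\times[0,1/2)\bigr):\ a+b<\tfrac34\right\}.\] Let $x,z\in U_1$ and let $y^*=\frac{x+z}{2}$. Then \[(1-\{x_1\})^2+(1-\{z_1\})^2-2(1-\{y^*_1\})^2\ge 2\left(\frac{z_1-x_1}{2}\right)^2.\]
   Context: For $x\in[0,1)$, $\{x\}:=x$ if $x\in[0,1/2)$ and $\{x\}:=x-1/2$ otherwise (this is not the usual fractional part). Subscripts denote coordinates of points in $\mathbb{R}^2$. *)

theory Defs
  imports "HOL-Analysis.Analysis"
begin

text \<open>The paper's modified fractional part on [0,1): x if x < 1/2, x - 1/2 otherwise.
  It is only applied to arguments in [0,1) in the statement.\<close>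
definition hfrac :: "real \<Rightarrow> real" where
  "hfrac x = (if 0 \<le> x \<and> x < 1/2 then x else x - 1/2)"

definition U1 :: "(real \<times> real) set" where
  "U1 = {(a, b). ((a \<in> {0..<1/2} \<and> b \<in> {1/2..<1}) \<or> (a \<in> {1/2..<1} \<and> b \<in> {0..<1/2}))
                 \<and> a + b < 3/4}"

end

theory Submission
  imports Defs
begin

lemma U1_fst: "p \<in> U1 \<Longrightarrow> 0 \<le> fst p \<and> fst p < 3/4 \<and> (fst p < 1/2 \<longrightarrow> fst p < 1/4)"
  unfolding U1_def by auto

lemma key:
  fixes a c :: real
  assumes ha: "0 \<le> a" "a < 3/4" "a < 1/2 \<longrightarrow> a < 1/4"
    and hc: "0 \<le> c" "c < 3/4" "c < 1/2 \<longrightarrow> c < 1/4"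
  shows "(1 - hfrac a)^2 + (1 - hfrac c)^2 - 2 * (1 - hfrac ((a+c)/2))^2 \<ge> 2 * ((c - a) / 2)^2"
proof (cases "a < 1/2")
  case True
  note A = this
  show ?thesis
  proof (cases "c < 1/2")
    case True
    have m: "(a+c)/2 < 1/2" using A True by simp
    have "(1 - a)^2 + (1 - c)^2 - 2 * (1 - (a+c)/2)^2 = 2 * ((c - a) / 2)^2"
      by (simp add: power2_eq_square field_simps)
    then show ?thesis using A True m ha hc by (simp add: hfrac_def)
  next
    case False
    have m: "(a+c)/2 < 1/2" using A False ha hc by simp
    have "(1 - a)^2 + (1 - (c - 1/2))^2 - 2 * (1 - (a+c)/2)^2 = 2 * ((c - a) / 2)^2 + (5/4 - c)"
      by (simp add: power2_eq_square field_simps)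
    then show ?thesis using A False m ha hc by (simp add: hfrac_def)
  qed
next
  case False
  note A = this
  show ?thesis
  proof (cases "c < 1/2")
    case True
    have m: "(a+c)/2 < 1/2" using A True ha hc by simp
    have "(1 - (a - 1/2))^2 + (1 - c)^2 - 2 * (1 - (a+c)/2)^2 = 2 * ((c - a) / 2)^2 + (5/4 - a)"
      by (simp add: power2_eq_square field_simps)
    then show ?thesis using A True m ha hc by (simp add: hfrac_def)
  next
    case False
    have m: "\<not> (a+c)/2 < 1/2" using A False by simp
    have "(1 - (a - 1/2))^2 + (1 - (c - 1/2))^2 - 2 * (1 - ((a+c)/2 - 1/2))^2 = 2 * ((c - a) / 2)^2"
      by (simp add: power2_eq_square field_simps)
    then show ?thesis using A False m ha hc by (simp add: hfrac_def)
  qed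
qed

theorem lemma4p3:
  fixes x z :: "real \<times> real"
  assumes "x \<in> U1" and "z \<in> U1"
  defines "ystar \<equiv> (1/2) *\<^sub>R (x + z)"
  shows "(1 - hfrac (fst x))^2 + (1 - hfrac (fst z))^2 - 2 * (1 - hfrac (fst ystar))^2
           \<ge> 2 * ((fst z - fst x) / 2)^2"
proof -
  have y: "fst ystar = (fst x + fst z) / 2" unfolding ystar_def by simp
  show ?thesis unfolding y
    using key U1_fst[OF assms(1)] U1_fst[OF assms(2)] by blast
qed

end
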